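(* Let $X$ be a $T_1$ topological space with at least two points and let $f\neq g$ be vertices of $\Gamma(C_c(X)_F)$. Then (i) $d(f,g)=1$ iff $Z(f)\cup Z(g)=X$; (ii) $d(f,g)=2$ iff $Z(f)\cup Z(g)\neq X$ and $Z(f)\cap Z(g)\neq\emptyset$; (iii) $d(f,g)=3$ iff $Z(f)\cup Z(g)\neq X$ and $Z(f)\cap Z(g)=\emptyset$.
   Context: $C_c(X)_F$ denotes the set of all functions $f:X\to\mathbb{R}$ whose range is countable and whose set of points of discontinuity is finite; it is a commutative ring under pointwise operations. $Z(f)=\{x:f(x)=0\}$. $\Gamma(C_c(X)_F)$ is the zero-divisor graph: its vertices are the nonzero zero divisors of $C_c(X)_F$ (equivalently the nonzero $f$ with $Z(f)\neq\emptyset$), and distinct vertices $f,g$ are adjacent iff $fg=0$. $d(f,g)$ is the length of a shortest path between $f$ and $g$. *)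

theory Defs
  imports "HOL-Analysis.Analysis" "HOL-Library.Extended_Nat"
begin

definition cont_at :: "'a topology \<Rightarrow> ('a \<Rightarrow> real) \<Rightarrow> 'a \<Rightarrow> bool" where
  "cont_at X f x \<longleftrightarrow> (\<forall>V. open V \<and> f x \<in> V \<longrightarrow>
      (\<exists>U. openin X U \<and> x \<in> U \<and> f ` U \<subseteq> V))"

definition discont_points :: "'a topology \<Rightarrow> ('a \<Rightarrow> real) \<Rightarrow> 'a set" where
  "discont_points X f = {x \<in> topspace X. \<not> cont_at X f x}"

definition CcF :: "'a topology \<Rightarrow> ('a \<Rightarrow> real) set" where
  "CcF X = {f. (\<forall>x. x \<notin> topspace X \<longrightarrow> f x = 0)
              \<and> countable (f ` topspace X)
              \<and> finite (discont_points X f)}"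

definition zset :: "'a topology \<Rightarrow> ('a \<Rightarrow> real) \<Rightarrow> 'a set" where
  "zset X f = {x \<in> topspace X. f x = 0}"

definition zd_vertex :: "'a topology \<Rightarrow> ('a \<Rightarrow> real) \<Rightarrow> bool" where
  "zd_vertex X f \<longleftrightarrow> f \<in> CcF X \<and> f \<noteq> (\<lambda>_. 0) \<and>
     (\<exists>g \<in> CcF X. g \<noteq> (\<lambda>_. 0) \<and> (\<lambda>x. f x * g x) = (\<lambda>_. 0))"

definition zd_adj :: "'a topology \<Rightarrow> ('a \<Rightarrow> real) \<Rightarrow> ('a \<Rightarrow> real) \<Rightarrow> bool" where
  "zd_adj X f g \<longleftrightarrow> zd_vertex X f \<and> zd_vertex X g \<and> f \<noteq> g \<and>
     (\<lambda>x. f x * g x) = (\<lambda>_. 0)"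

text \<open>A path of length n from f to g: a list of n+1 vertices, consecutive ones adjacent.\<close>
definition zd_path :: "'a topology \<Rightarrow> ('a \<Rightarrow> real) list \<Rightarrow> bool" where
  "zd_path X ps \<longleftrightarrow> ps \<noteq> [] \<and> (\<forall>p \<in> set ps. zd_vertex X p) \<and>
     (\<forall>i. Suc i < length ps \<longrightarrow> zd_adj X (ps ! i) (ps ! Suc i))"

text \<open>Graph distance (\<infinity> if no path).\<close>
definition zd_dist :: "'a topology \<Rightarrow> ('a \<Rightarrow> real) \<Rightarrow> ('a \<Rightarrow> real) \<Rightarrow> enat" where
  "zd_dist X f g = Inf {enat (length ps - 1) | ps. zd_path X ps \<and> hd ps = f \<and> last ps = g}"

end

theory Submission
  imports Defs
begin

definition ept :: "'a topology \<Rightarrow> 'a \<Rightarrow> 'a \<Rightarrow> real" where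
  "ept X x = (\<lambda>y. if y = x then 1 else 0)"
definition cpt :: "'a topology \<Rightarrow> 'a \<Rightarrow> 'a \<Rightarrow> real" where
  "cpt X x = (\<lambda>y. if y \<in> topspace X \<and> y \<noteq> x then 1 else 0)"

lemma cont_at_const:
  assumes "openin X U" "y \<in> U" "\<And>z. z \<in> U \<Longrightarrow> h z = h y"
  shows "cont_at X h y"
  unfolding cont_at_def
proof (intro allI impI)
  fix V assume "open V \<and> h y \<in> V"
  then have "h ` U \<subseteq> V" using assms(3) by auto
  then show "\<exists>U. openin X U \<and> y \<in> U \<and> h ` U \<subseteq> V" using assms by blast
qed

lemma disc_sub:
  assumes "t1_space X"
    and "\<And>z. z \<in> topspace X - {x} \<Longrightarrow> h z = c"
  shows "discont_points X h \<subseteq> {x}"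
proof
  fix y assume y: "y \<in> discont_points X h"
  show "y \<in> {x}"
  proof (rule ccontr)
    assume "y \<notin> {x}"
    have "openin X (topspace X - {x})"
    proof (cases "x \<in> topspace X")
      case True
      then show ?thesis using t1_space_closedin_singleton[of X] assms(1)
        by (simp add: closedin_def)
    next
      case False
      then show ?thesis by simp
    qed
    moreover have "y \<in> topspace X - {x}" using y \<open>y \<notin> {x}\<close> by (auto simp: discont_points_def)
    ultimately have "cont_at X h y" using assms(2)
      by (intro cont_at_const[of X "topspace X - {x}"]) auto
    then show False using y by (auto simp: discont_points_def)
  qed
qed

lemma finite_range_countable:
  assumes "h ` A \<subseteq> {0,1}" shows "countable (h ` A)"
proof (rule countable_finite)
  show "finite (h ` A)" using assms by (rule finite_subset) simp
qed

lemma ept_CcF: "t1_space X \<Longrightarrow> x \<in> topspace X \<Longrightarrow> ept X x \<in> CcF X"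
  unfolding CcF_def
  apply (intro CollectI conjI)
    apply (auto simp: ept_def)[1]
   apply (rule finite_range_countable, auto simp: ept_def)[1]
  apply (rule finite_subset[OF disc_sub[where c=0]])
    apply (auto simp: ept_def)
  done

lemma cpt_CcF: "t1_space X \<Longrightarrow> cpt X x \<in> CcF X"
  unfolding CcF_def
  apply (intro CollectI conjI)
    apply (auto simp: cpt_def)[1]
   apply (rule finite_range_countable, auto simp: cpt_def)[1]
  apply (rule finite_subset[OF disc_sub[where c=1]])
    apply (auto simp: cpt_def)
  done

lemma ept_vertex:
  assumes "t1_space X" "x \<in> topspace X" "b \<in> topspace X" "b \<noteq> x"
  shows "zd_vertex X (ept X x)"
  unfolding zd_vertex_def
proof (intro conjI)
  show "ept X x \<in> CcF X" by (rule ept_CcF[OF assms(1,2)])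
  have "ept X x x \<noteq> 0" by (simp add: ept_def)
  then show "ept X x \<noteq> (\<lambda>_. 0)" by force
  have "cpt X x b \<noteq> 0" using assms(3,4) by (simp add: cpt_def)
  then have c0: "cpt X x \<noteq> (\<lambda>_. 0)" by force
  have c1: "(\<lambda>y. ept X x y * cpt X x y) = (\<lambda>_. 0)" by (rule ext) (simp add: ept_def cpt_def)
  show "\<exists>g\<in>CcF X. g \<noteq> (\<lambda>_. 0) \<and> (\<lambda>y. ept X x y * g y) = (\<lambda>_. 0)"
    using cpt_CcF[OF assms(1), of x] c0 c1 by blast
qed

lemma vertex_ext: "zd_vertex X f \<Longrightarrow> y \<notin> topspace X \<Longrightarrow> f y = 0"
  by (auto simp: zd_vertex_def CcF_def)

lemma vertex_nonzero: "zd_vertex X f \<Longrightarrow> \<exists>y \<in> topspace X. f y \<noteq> 0"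
proof -
  assume f: "zd_vertex X f"
  then obtain y where "f y \<noteq> 0" unfolding zd_vertex_def by auto
  then show ?thesis using vertex_ext[OF f] by blast
qed

lemma vertex_zset: "zd_vertex X f \<Longrightarrow> zset X f \<noteq> {}"
proof -
  assume f: "zd_vertex X f"
  then obtain h where h: "h \<in> CcF X" "h \<noteq> (\<lambda>_. 0)" "(\<lambda>x. f x * h x) = (\<lambda>_. 0)"
    unfolding zd_vertex_def by blast
  then obtain y where "h y \<noteq> 0" by auto
  moreover then have "y \<in> topspace X" using h(1) by (auto simp: CcF_def)
  moreover have "f y * h y = 0" using h(3) by metis
  ultimately show ?thesis by (auto simp: zset_def)
qed

lemma prod_zero_iff:
  assumes f: "zd_vertex X f"
  shows "((\<lambda>x. f x * g x) = (\<lambda>_. 0)) \<longleftrightarrow> zset X f \<union> zset X g = topspace X"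
proof
  assume h: "(\<lambda>x. f x * g x) = (\<lambda>_. 0)"
  show "zset X f \<union> zset X g = topspace X"
  proof (rule set_eqI)
    fix y
    have "f y * g y = 0" using h by (rule fun_cong[where x=y, simplified])
    then show "y \<in> zset X f \<union> zset X g \<longleftrightarrow> y \<in> topspace X"
      unfolding zset_def by auto
  qed
next
  assume h: "zset X f \<union> zset X g = topspace X"
  show "(\<lambda>x. f x * g x) = (\<lambda>_. 0)"
  proof (rule ext)
    fix y
    show "f y * g y = 0"
    proof (cases "y \<in> topspace X")
      case True
      then have "y \<in> zset X f \<union> zset X g" using h by simp
      then show ?thesis unfolding zset_def by auto
    next
      case False
      then show ?thesis using vertex_ext[OF f] by simp
    qed
  qed
qed

lemma adj_ept_prod: "f x = 0 \<Longrightarrow> (\<lambda>y. f y * ept X x y) = (\<lambda>_. 0)"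
  by (rule ext) (simp add: ept_def)

lemma adj_ept:
  assumes "zd_vertex X f" "zd_vertex X (ept X x)" "f x = 0"
  shows "zd_adj X f (ept X x)" "zd_adj X (ept X x) f"
proof -
  have ne: "f \<noteq> ept X x"
  proof
    assume "f = ept X x"
    then have "f x = 1" by (simp add: ept_def)
    then show False using assms(3) by simp
  qed
  have p1: "(\<lambda>y. f y * ept X x y) = (\<lambda>_. 0)" by (rule adj_ept_prod[of f x, OF assms(3)])
  have p2: "(\<lambda>y. ept X x y * f y) = (\<lambda>_. 0)" using p1 by (simp add: mult.commute)
  show "zd_adj X f (ept X x)" unfolding zd_adj_def using assms(1,2) ne p1 by blast
  show "zd_adj X (ept X x) f" unfolding zd_adj_def using assms(1,2) ne p2 by metis
qed

lemma zd_path_single: "zd_vertex X a \<Longrightarrow> zd_path X [a]"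
  by (simp add: zd_path_def)

lemma zd_path_adj:
  assumes "zd_path X ps" "Suc i < length ps"
  shows "zd_adj X (ps ! i) (ps ! Suc i)"
proof -
  have h: "\<forall>i. Suc i < length ps \<longrightarrow> zd_adj X (ps ! i) (ps ! Suc i)"
    using assms(1) unfolding zd_path_def by (rule conjunct2[THEN conjunct2])
  show ?thesis by (rule mp[OF spec[OF h] assms(2)])
qed

lemma zd_path_Cons2:
  assumes "zd_adj X a b" "zd_path X (b # ys)"
  shows "zd_path X (a # b # ys)"
  unfolding zd_path_def
proof (intro conjI allI impI)
  show "a # b # ys \<noteq> []" by simp
  have "zd_vertex X a" using assms(1) unfolding zd_adj_def by blast
  moreover have "\<forall>p\<in>set (b # ys). zd_vertex X p" using assms(2) unfolding zd_path_def by blast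
  ultimately show "\<forall>p\<in>set (a # b # ys). zd_vertex X p" by simp
  fix i assume i: "Suc i < length (a # b # ys)"
  show "zd_adj X ((a # b # ys) ! i) ((a # b # ys) ! Suc i)"
  proof (cases i)
    case 0 then show ?thesis using assms(1) by simp
  next
    case (Suc j)
    then have "Suc j < length (b # ys)" using i by simp
    then have "zd_adj X ((b # ys) ! j) ((b # ys) ! Suc j)"
      by (rule zd_path_adj[OF assms(2)])
    then show ?thesis using Suc by simp
  qed
qed

theorem theorem8p5:
  fixes X :: "'a topology" and f g :: "'a \<Rightarrow> real"
  assumes "t1_space X"
    and "\<exists>a b. a \<in> topspace X \<and> b \<in> topspace X \<and> a \<noteq> b"
    and "zd_vertex X f" and "zd_vertex X g" and "f \<noteq> g"
  shows "(zd_dist X f g = 1 \<longleftrightarrow> zset X f \<union> zset X g = topspace X)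
       \<and> (zd_dist X f g = 2 \<longleftrightarrow> zset X f \<union> zset X g \<noteq> topspace X \<and> zset X f \<inter> zset X g \<noteq> {})
       \<and> (zd_dist X f g = 3 \<longleftrightarrow> zset X f \<union> zset X g \<noteq> topspace X \<and> zset X f \<inter> zset X g = {})"
proof -
  define S where "S = {enat (length ps - 1) | ps. zd_path X ps \<and> hd ps = f \<and> last ps = g}"
  have dS: "zd_dist X f g = Inf S" unfolding S_def zd_dist_def by (rule refl)
  define U where "U = (zset X f \<union> zset X g = topspace X)"
  define I where "I = (zset X f \<inter> zset X g \<noteq> {})"
  have ev: "zd_vertex X (ept X x)" if "x \<in> topspace X" for x
  proof -
    obtain a b where "a \<in> topspace X" "b \<in> topspace X" "a \<noteq> b" using assms(2) by blast
    then obtain c where "c \<in> topspace X" "c \<noteq> x" by (cases "a = x") auto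
    then show ?thesis by (rule ept_vertex[OF assms(1) that])
  qed
  have Sdesc: "\<exists>ps. zd_path X ps \<and> hd ps = f \<and> last ps = g \<and> length ps = Suc n" if "enat n \<in> S" for n
  proof -
    from that obtain ps where ps: "zd_path X ps" "hd ps = f" "last ps = g" "n = length ps - 1"
      unfolding S_def by auto
    then have "ps \<noteq> []" by (simp add: zd_path_def)
    then show ?thesis using ps by (intro exI[of _ ps]) auto
  qed
  have inS: "enat (length ps - 1) \<in> S" if "zd_path X ps" "hd ps = f" "last ps = g" for ps
    unfolding S_def using that by blast
  have no0: "enat 0 \<notin> S"
  proof
    assume "enat 0 \<in> S"
    then obtain ps where ps: "zd_path X ps" "hd ps = f" "last ps = g" "length ps = Suc 0"
      using Sdesc by blast
    then obtain a where "ps = [a]" by (auto simp: length_Suc_conv)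
    then show False using ps assms(5) by simp
  qed
  have P1: "U" if h1: "enat 1 \<in> S"
  proof -
    obtain ps where ps: "zd_path X ps" "hd ps = f" "last ps = g" "length ps = Suc (Suc 0)"
      using Sdesc[of 1, OF h1] by auto
    then obtain a b where ab: "ps = [a,b]" by (auto simp: length_Suc_conv)
    have "zd_adj X (ps ! 0) (ps ! Suc 0)" using zd_path_adj[OF ps(1)] ps(4) by simp
    then have "zd_adj X f g" using ps(2,3) ab by simp
    then show U unfolding U_def zd_adj_def using prod_zero_iff assms(3) by blast
  qed
  have P2: "I" if h2: "enat 2 \<in> S"
  proof -
    obtain ps where ps: "zd_path X ps" "hd ps = f" "last ps = g" "length ps = Suc (Suc (Suc 0))"
      using Sdesc[of 2, OF h2] unfolding numeral_2_eq_2 by blast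
    then obtain a b c where ab: "ps = [a,b,c]" by (auto simp: length_Suc_conv)
    have "zd_adj X (ps ! 0) (ps ! Suc 0)" "zd_adj X (ps ! Suc 0) (ps ! Suc (Suc 0))"
      using zd_path_adj[OF ps(1)] ps(4) by simp_all
    then have a1: "zd_adj X f b" and a2: "zd_adj X b g" using ps(2,3) ab by simp_all
    then obtain y where y: "y \<in> topspace X" "b y \<noteq> 0"
      using vertex_nonzero a1 unfolding zd_adj_def by blast
    have "f y * b y = 0" "b y * g y = 0" using a1 a2 unfolding zd_adj_def by metis+
    then show I using y unfolding I_def zset_def by auto
  qed
  have ge1: "1 \<le> s" if hs: "s \<in> S" for s
  proof -
    obtain ps where ps: "zd_path X ps" "hd ps = f" "last ps = g" "s = enat (length ps - 1)"
      using hs unfolding S_def by auto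
    then have "length ps - 1 \<noteq> 0" using no0 inS by metis
    then show ?thesis using ps by (simp add: one_enat_def)
  qed
  have case1: "zd_dist X f g = 1" if U
  proof -
    have "zd_adj X f g" using that assms prod_zero_iff unfolding zd_adj_def U_def by blast
    then have "zd_path X [f,g]" using assms by (intro zd_path_Cons2 zd_path_single)
    then have "enat (length [f,g] - 1) \<in> S" using inS[of "[f,g]"] by simp
    then have "Inf S \<le> enat (length [f,g] - 1)" by (rule Inf_lower)
    then have "Inf S \<le> 1" by (simp add: one_enat_def)
    moreover have "1 \<le> Inf S" using ge1 by (rule Inf_greatest)
    ultimately show ?thesis using dS by simp
  qed
  have case2: "zd_dist X f g = 2" if "\<not> U" I
  proof -
    from that obtain x where x: "x \<in> zset X f" "x \<in> zset X g" unfolding I_def by auto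
    then have xt: "x \<in> topspace X" and fx: "f x = 0" and gx: "g x = 0" by (auto simp: zset_def)
    have a1: "zd_adj X f (ept X x)" using adj_ept(1)[OF assms(3) ev[OF xt] fx] .
    have a2: "zd_adj X (ept X x) g" using adj_ept(2)[OF assms(4) ev[OF xt] gx] .
    have "zd_path X [f, ept X x, g]" using assms a1 a2
      by (intro zd_path_Cons2 zd_path_single)
    then have "enat (length ([f, ept X x, g]) - 1) \<in> S" using inS[of "[f, ept X x, g]"] by simp
    then have "Inf S \<le> enat (length ([f, ept X x, g]) - 1)" by (rule Inf_lower)
    then have "Inf S \<le> 2" by (simp add: numeral_eq_enat numeral_2_eq_2)
    moreover have "2 \<le> Inf S"
    proof (rule Inf_greatest)
      fix s assume s: "s \<in> S"
      then obtain k where k: "s = enat k" unfolding S_def by auto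
      have "k \<noteq> 0" using no0 s k by metis
      moreover have "k \<noteq> 1" using P1 that s k by auto
      ultimately show "2 \<le> s" using k by (simp add: numeral_eq_enat)
    qed
    ultimately show ?thesis using dS by simp
  qed
  have case3: "zd_dist X f g = 3" if "\<not> U" "\<not> I"
  proof -
    obtain a where a: "a \<in> zset X f" using vertex_zset assms(3) by blast
    obtain b where b: "b \<in> zset X g" using vertex_zset assms(4) by blast
    have ab: "a \<noteq> b" using a b that(2) unfolding I_def by auto
    have at: "a \<in> topspace X" "f a = 0" and bt: "b \<in> topspace X" "g b = 0"
      using a b by (auto simp: zset_def)
    have a1: "zd_adj X f (ept X a)" using adj_ept(1)[OF assms(3) ev[OF at(1)] at(2)] .
    have a3: "zd_adj X (ept X b) g" using adj_ept(2)[OF assms(4) ev[OF bt(1)] bt(2)] .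
    have a2: "zd_adj X (ept X a) (ept X b)"
      using ev[OF at(1)] ev[OF bt(1)] ab unfolding zd_adj_def
      by (auto simp: ept_def fun_eq_iff)
    have "zd_path X [f, ept X a, ept X b, g]" using assms a1 a2 a3
      by (intro zd_path_Cons2 zd_path_single)
    then have "enat (length ([f, ept X a, ept X b, g]) - 1) \<in> S" using inS[of "[f, ept X a, ept X b, g]"] by simp
    then have "Inf S \<le> enat (length ([f, ept X a, ept X b, g]) - 1)" by (rule Inf_lower)
    then have "Inf S \<le> 3" by (simp add: numeral_eq_enat numeral_3_eq_3)
    moreover have "3 \<le> Inf S"
    proof (rule Inf_greatest)
      fix s assume s: "s \<in> S"
      then obtain k where k: "s = enat k" unfolding S_def by auto
      have "k \<noteq> 0" using no0 s k by metis
      moreover have "k \<noteq> 1" using P1 that s k by auto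
      moreover have "k \<noteq> 2" using P2 that s k by auto
      ultimately show "3 \<le> s" using k by (simp add: numeral_eq_enat)
    qed
    ultimately show ?thesis using dS by simp
  qed
  show ?thesis
  proof -
    have d: "(1::enat) \<noteq> 2" "(1::enat) \<noteq> 3" "(2::enat) \<noteq> 3" by simp_all
    show ?thesis using case1 case2 case3 d unfolding U_def[symmetric] I_def[symmetric]
      by (cases U; cases I) (auto simp: I_def)
  qed
qed

end
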